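(* Let $c>\frac12$ and $\delta>0$ be fixed. Let $\ell\ge3$ and let $\ell_1,\ell_2,\ell_3$ be positive integers with $\ell_1+\ell_2+\ell_3=\ell$. For $\mathbf y_1,\dots,\mathbf y_{\ell-2}\in\mathbb R^n$ and $\varepsilon_1,\dots,\varepsilon_{\ell-2}\in\{1,-1\}$ consider $$V_n^{-2\ell c}\int_{\mathbb R^n}\int_{\mathbb R^n}f_{c,\delta}(\mathbf x_1)\prod_{i=1}^{\ell_1-1}f_{c,\delta}(\varepsilon_i\mathbf x_1+\mathbf y_i)\; f_{c,\delta}(\mathbf x_2)\prod_{i=\ell_1}^{\ell_1+\ell_2-2}f_{c,\delta}(\varepsilon_i\mathbf x_2+\mathbf y_i)\prod_{i=\ell_1+\ell_2-1}^{\ell-2}f_{c,\delta}\big(\varepsilon_i(\mathbf x_1+\mathbf x_2)+\mathbf y_i\big)\,d\mathbf x_1\,d\mathbf x_2 .$$ There exist constants $K>0$ and $0<\rho<1$, depending only on $\ell,c,\delta$ (and not on $n$, the $\varepsilon_i$ or the $\mathbf y_i$), such that this integral is at most $K\rho^n$ for all $n\ge1$, all $\varepsilon_i$ and all $\mathbf y_i$.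
   Context: $V_n=\pi^{n/2}/\Gamma(\frac n2+1)$ is the volume of the unit ball in $\mathbb R^n$, $R_n(\delta)=(\delta/V_n)^{1/n}$, and $f_{c,\delta}(\mathbf x)=|\mathbf x|^{-2cn}$ if $|\mathbf x|>R_n(\delta)$, $f_{c,\delta}(\mathbf x)=0$ otherwise. Empty products equal $1$. *)

theory Defs
  imports "HOL-Analysis.Analysis" "HOL-Probability.Probability"
begin

text \<open>Points of R^n are represented as functions nat => real; only the
coordinates 0..n-1 matter. Lebesgue measure on R^n is the product measure.\<close>

definition Rn_measure :: "nat \<Rightarrow> (nat \<Rightarrow> real) measure" where
  "Rn_measure n = PiM {..<n} (\<lambda>_. lborel)"

definition vnorm :: "nat \<Rightarrow> (nat \<Rightarrow> real) \<Rightarrow> real" where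
  "vnorm n x = sqrt (\<Sum>i<n. (x i)\<^sup>2)"

definition ball_vol :: "nat \<Rightarrow> real" where
  "ball_vol n = pi powr (real n / 2) / Gamma (real n / 2 + 1)"

definition Rrad :: "nat \<Rightarrow> real \<Rightarrow> real" where
  "Rrad n \<delta> = (\<delta> / ball_vol n) powr (1 / real n)"

definition fcd :: "real \<Rightarrow> real \<Rightarrow> nat \<Rightarrow> (nat \<Rightarrow> real) \<Rightarrow> real" where
  "fcd c \<delta> n x = (if vnorm n x > Rrad n \<delta> then vnorm n x powr (- 2 * c * real n) else 0)"

end

theory Submission
  imports Defs
begin

lemma gauss1:
  fixes a m :: real assumes a: "a > 0"
  shows "(\<integral>\<^sup>+t. ennreal (exp (-(a*(t+m)^2))) \<partial>lborel) = ennreal (sqrt (pi/a))"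
proof -
  define \<sigma> where "\<sigma> = sqrt (1/(2*a))"
  have s2: "\<sigma>^2 = 1/(2*a)" using a by (simp add: \<sigma>_def)
  have spos: "\<sigma> > 0" using a by (simp add: \<sigma>_def)
  have eq: "exp (-(a*(t+m)^2)) = sqrt (pi/a) * normal_density (-m) \<sigma> t" for t
  proof -
    have "sqrt (2*pi*\<sigma>^2) = sqrt (pi/a)" using s2 a by simp
    moreover have "- ((t + m)^2) / (2*\<sigma>^2) = -(a*(t+m)^2)" using s2 a by (simp add: s2)
    ultimately show ?thesis using a by (simp add: normal_density_def)
  qed
  have "(\<integral>\<^sup>+t. ennreal (normal_density (-m) \<sigma> t) \<partial>lborel) = 1"
    using integrable_normal_density[OF spos] integral_normal_density[OF spos] by (subst nn_integral_eq_integral) (auto simp: normal_density_nonneg)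
  then show ?thesis
    apply (simp only: eq)
    apply (subst ennreal_mult) using a apply (simp_all add: normal_density_nonneg)
    apply (subst nn_integral_cmult) apply auto
    done
qed

lemma gauss2:
  fixes a b z :: real assumes a: "a > 0" and b: "b \<ge> 0"
  shows "(\<integral>\<^sup>+t. ennreal (exp (-(a*t^2 + b*(t+z)^2))) \<partial>lborel)
     = ennreal (sqrt (pi/(a+b)) * exp (-(a*b/(a+b))*z^2))"
proof -
  have ab: "a + b > 0" using a b by simp
  have eq: "exp (-(a*t^2 + b*(t+z)^2)) = exp (-(a*b/(a+b))*z^2) * exp (-((a+b)*(t + b*z/(a+b))^2))" for t
  proof -
    have e1: "t + b*z/(a+b) = ((a+b)*t + b*z)/(a+b)" using ab by (simp add: field_simps)
    have e2: "(a+b)*(t + b*z/(a+b))^2 = ((a+b)*t + b*z)^2/(a+b)"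
      unfolding e1 using ab by (simp add: power2_eq_square)
    have e3: "a*b*z^2 + ((a+b)*t + b*z)^2 = (a+b)*(a*t^2 + b*(t+z)^2)"
      by (simp add: power2_eq_square algebra_simps)
    have "-(a*b/(a+b))*z^2 + -((a+b)*(t + b*z/(a+b))^2) = -((a*b*z^2 + ((a+b)*t + b*z)^2)/(a+b))"
      unfolding e2 by (simp add: add_divide_distrib)
    also have "\<dots> = -(a*t^2 + b*(t+z)^2)" unfolding e3 using ab by simp
    finally have "-(a*t^2 + b*(t+z)^2) = -(a*b/(a+b))*z^2 + -((a+b)*(t + b*z/(a+b))^2)" by simp
    then show ?thesis by (simp add: exp_add[symmetric])
  qed
  show ?thesis
    apply (simp only: eq)
    apply (subst ennreal_mult, simp, simp)
    apply (subst nn_integral_cmult, simp)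
    apply (subst gauss1[OF ab])
    apply (subst ennreal_mult[symmetric]) using ab apply (auto simp: mult.commute)
    done
qed

lemma gauss_pair:
  fixes l1 l2 l3 e :: real and y :: "nat \<Rightarrow> real" and n :: nat
  assumes p1: "l1 > 0" and p2: "l2 > 0" and p3: "l3 > 0" and e: "e*e = 1"
  shows "(\<integral>\<^sup>+x1. \<integral>\<^sup>+x2. ennreal (exp (-(l1*(\<Sum>j<n. (x1 j)^2) + l2*(\<Sum>j<n. (x2 j)^2)
            + l3*(\<Sum>j<n. (e*(x1 j + x2 j) + y j)^2)))) \<partial>Rn_measure n \<partial>Rn_measure n)
         \<le> ennreal ((pi / sqrt (l1*l2 + l1*l3 + l2*l3))^n)"
proof -
  interpret product_sigma_finite "\<lambda>_::nat. lborel" by standard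
  define \<kappa> where "\<kappa> = l2*l3/(l2+l3)"
  define C2 where "C2 = sqrt (pi/(l2+l3))"
  define C1 where "C1 = sqrt (pi/(l1+\<kappa>))"
  have kpos: "\<kappa> > 0" using p2 p3 by (simp add: \<kappa>_def)
  have sq: "(e*(s+t) + w)^2 = (t + (s + e*w))^2" for s t w
  proof -
    have "e*(t + (s + e*w)) = e*(s+t) + (e*e)*w" by (simp add: algebra_simps)
    then have "e*(s+t) + w = e*(t + (s + e*w))" using e by simp
    then have "(e*(s+t) + w)^2 = (e*(t + (s + e*w)))^2" by simp
    also have "\<dots> = (e*e)*(t + (s + e*w))^2" by (simp only: power_mult_distrib power2_eq_square[of e])
    finally show ?thesis using e by simp
  qed
  have pt: "ennreal (exp (-(l1*(\<Sum>j<n. (x1 j)^2) + l2*(\<Sum>j<n. (x2 j)^2)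
            + l3*(\<Sum>j<n. (e*(x1 j + x2 j) + y j)^2))))
     = (\<Prod>j<n. ennreal (exp (-(l1*(x1 j)^2)) * exp (-(l2*(x2 j)^2 + l3*(x2 j + (x1 j + e*y j))^2))))" for x1 x2
  proof -
    have "-(l1*(\<Sum>j<n. (x1 j)^2) + l2*(\<Sum>j<n. (x2 j)^2) + l3*(\<Sum>j<n. (e*(x1 j + x2 j) + y j)^2))
       = (\<Sum>j<n. -(l1*(x1 j)^2) + -(l2*(x2 j)^2 + l3*(x2 j + (x1 j + e*y j))^2))"
    proof -
      have A: "(\<Sum>j<n. (e*(x1 j + x2 j) + y j)^2) = (\<Sum>j<n. (x2 j + (x1 j + e*y j))^2)" by (simp only: sq)
      have B: "(\<Sum>j<n. -(l1*(x1 j)^2) + -(l2*(x2 j)^2 + l3*(x2 j + (x1 j + e*y j))^2))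
          = -(\<Sum>j<n. l1*(x1 j)^2 + l2*(x2 j)^2 + l3*(x2 j + (x1 j + e*y j))^2)"
        by (subst sum_negf[symmetric], rule sum.cong, auto)
      have C: "(\<Sum>j<n. l1*(x1 j)^2 + l2*(x2 j)^2 + l3*(x2 j + (x1 j + e*y j))^2) = l1*(\<Sum>j<n. (x1 j)^2) + l2*(\<Sum>j<n. (x2 j)^2) + l3*(\<Sum>j<n. (x2 j + (x1 j + e*y j))^2)"
        by (simp add: sum.distrib sum_distrib_left)
      show ?thesis unfolding A B C ..
    qed
    then have "exp (-(l1*(\<Sum>j<n. (x1 j)^2) + l2*(\<Sum>j<n. (x2 j)^2) + l3*(\<Sum>j<n. (e*(x1 j + x2 j) + y j)^2)))
       = (\<Prod>j<n. exp (-(l1*(x1 j)^2)) * exp (-(l2*(x2 j)^2 + l3*(x2 j + (x1 j + e*y j))^2)))"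
      by (simp only: exp_sum[OF finite_lessThan] exp_add)
    then show ?thesis by (simp add: prod_ennreal)
  qed
  have inner: "(\<integral>\<^sup>+x2. (\<Prod>j<n. ennreal (exp (-(l1*(x1 j)^2)) * exp (-(l2*(x2 j)^2 + l3*(x2 j + (x1 j + e*y j))^2)))) \<partial>Rn_measure n)
     = (\<Prod>j<n. ennreal (C2 * exp (-(l1*(x1 j)^2 + \<kappa>*(x1 j + e*y j)^2))))" for x1
  proof -
    have "(\<integral>\<^sup>+x2. (\<Prod>j<n. ennreal (exp (-(l1*(x1 j)^2)) * exp (-(l2*(x2 j)^2 + l3*(x2 j + (x1 j + e*y j))^2)))) \<partial>Rn_measure n)
       = (\<Prod>j<n. \<integral>\<^sup>+t. ennreal (exp (-(l1*(x1 j)^2)) * exp (-(l2*t^2 + l3*(t + (x1 j + e*y j))^2))) \<partial>lborel)"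
      unfolding Rn_measure_def
      by (rule product_nn_integral_prod[where f="\<lambda>j t. ennreal (exp (-(l1*(x1 j)^2)) * exp (-(l2*t^2 + l3*(t + (x1 j + e*y j))^2)))"]) auto
    also have "\<dots> = (\<Prod>j<n. ennreal (C2 * exp (-(l1*(x1 j)^2 + \<kappa>*(x1 j + e*y j)^2))))"
    proof (rule prod.cong[OF refl])
      fix j
      have "(\<integral>\<^sup>+t. ennreal (exp (-(l1*(x1 j)^2)) * exp (-(l2*t^2 + l3*(t + (x1 j + e*y j))^2))) \<partial>lborel)
         = ennreal (exp (-(l1*(x1 j)^2))) * (\<integral>\<^sup>+t. ennreal (exp (-(l2*t^2 + l3*(t + (x1 j + e*y j))^2))) \<partial>lborel)"
        by (subst nn_integral_cmult[symmetric]) (auto simp: ennreal_mult)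
      also have "\<dots> = ennreal (exp (-(l1*(x1 j)^2))) * ennreal (C2 * exp (-\<kappa>*(x1 j + e*y j)^2))"
        using gauss2[OF p2, of l3] p3 by (simp add: C2_def \<kappa>_def)
      also have "\<dots> = ennreal (C2 * exp (-(l1*(x1 j)^2 + \<kappa>*(x1 j + e*y j)^2)))"
      proof -
        have eqr: "exp (-(l1*(x1 j)^2)) * (C2 * exp (-\<kappa>*(x1 j + e*y j)^2)) = C2 * exp (-(l1*(x1 j)^2 + \<kappa>*(x1 j + e*y j)^2))"
          by (simp add: exp_add[symmetric] exp_diff algebra_simps)
        have "ennreal (exp (-(l1*(x1 j)^2))) * ennreal (C2 * exp (-\<kappa>*(x1 j + e*y j)^2)) = ennreal (exp (-(l1*(x1 j)^2)) * (C2 * exp (-\<kappa>*(x1 j + e*y j)^2)))"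
          using p2 p3 by (intro ennreal_mult[symmetric]) (auto simp: C2_def)
        then show ?thesis by (simp only: eqr)
      qed
      finally show "(\<integral>\<^sup>+t. ennreal (exp (-(l1*(x1 j)^2)) * exp (-(l2*t^2 + l3*(t + (x1 j + e*y j))^2))) \<partial>lborel)
         = ennreal (C2 * exp (-(l1*(x1 j)^2 + \<kappa>*(x1 j + e*y j)^2)))" .
    qed
    finally show ?thesis .
  qed
  have "(\<integral>\<^sup>+x1. \<integral>\<^sup>+x2. ennreal (exp (-(l1*(\<Sum>j<n. (x1 j)^2) + l2*(\<Sum>j<n. (x2 j)^2)
            + l3*(\<Sum>j<n. (e*(x1 j + x2 j) + y j)^2)))) \<partial>Rn_measure n \<partial>Rn_measure n)
     = (\<integral>\<^sup>+x1. (\<Prod>j<n. ennreal (C2 * exp (-(l1*(x1 j)^2 + \<kappa>*(x1 j + e*y j)^2)))) \<partial>Rn_measure n)"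
    by (simp only: pt inner)
  also have "\<dots> = (\<Prod>j<n. \<integral>\<^sup>+u. ennreal (C2 * exp (-(l1*u^2 + \<kappa>*(u + e*y j)^2))) \<partial>lborel)"
    unfolding Rn_measure_def
    by (rule product_nn_integral_prod[where f="\<lambda>j u. ennreal (C2 * exp (-(l1*u^2 + \<kappa>*(u + e*y j)^2)))"]) auto
  also have "\<dots> \<le> (\<Prod>j<n. ennreal (C1 * C2))"
  proof (rule prod_mono_ennreal)
    fix j assume "j \<in> {..<n}"
    have "(\<integral>\<^sup>+u. ennreal (C2 * exp (-(l1*u^2 + \<kappa>*(u + e*y j)^2))) \<partial>lborel)
        = ennreal C2 * (\<integral>\<^sup>+u. ennreal (exp (-(l1*u^2 + \<kappa>*(u + e*y j)^2))) \<partial>lborel)"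
      using p2 p3 by (subst nn_integral_cmult[symmetric]) (auto simp: ennreal_mult C2_def intro!: nn_integral_cong)
    also have "\<dots> = ennreal C2 * ennreal (C1 * exp (-(l1*\<kappa>/(l1+\<kappa>))*(e*y j)^2))"
      using gauss2[OF p1, of \<kappa>] kpos by (simp add: C1_def)
    also have "\<dots> \<le> ennreal C2 * ennreal (C1 * 1)"
      apply (rule mult_left_mono) apply (rule ennreal_leI) apply (rule mult_left_mono)
      using p1 kpos by (auto simp: C1_def intro!: mult_nonneg_nonneg)
    also have "\<dots> = ennreal (C1 * C2)" using p1 p2 p3 kpos by (simp add: ennreal_mult[symmetric] C1_def C2_def mult.commute)
    finally show "(\<integral>\<^sup>+u. ennreal (C2 * exp (-(l1*u^2 + \<kappa>*(u + e*y j)^2))) \<partial>lborel) \<le> ennreal (C1 * C2)" .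
  qed
  also have "\<dots> = ennreal ((C1*C2)^n)"
    using p1 p2 p3 kpos by (simp add: ennreal_power C1_def C2_def)
  also have "C1 * C2 = pi / sqrt (l1*l2 + l1*l3 + l2*l3)"
  proof -
    have "(l2+l3)*(l1+\<kappa>) = l1*l2 + l1*l3 + l2*l3" using p2 p3 by (simp add: \<kappa>_def field_simps)
    moreover have "C1*C2 = sqrt (pi*pi/((l2+l3)*(l1+\<kappa>)))"
      by (simp add: C1_def C2_def real_sqrt_mult[symmetric] mult.commute)
    ultimately show ?thesis using p1 p2 p3 by (simp add: real_sqrt_divide real_sqrt_mult)
  qed
  finally show ?thesis .
qed

lemma ball_vol_pos: "ball_vol n > 0"
  unfolding ball_vol_def by (auto intro!: divide_pos_pos Gamma_real_pos)

lemma Rrad_pos: "\<delta> > 0 \<Longrightarrow> Rrad n \<delta> > 0"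
  unfolding Rrad_def using ball_vol_pos[of n] by simp

lemma vnorm_sq: "(vnorm n x)^2 = (\<Sum>j<n. (x j)^2)"
  unfolding vnorm_def by (simp add: sum_nonneg)

lemma fcd_sum_bound:
  fixes c \<delta> q :: real and n :: nat and x :: "nat \<Rightarrow> real"
  assumes c: "c > 0" and d: "\<delta> > 0" and q: "q > 1" and n: "n \<ge> 1"
  shows "ennreal (fcd c \<delta> n x) \<le> (\<Sum>k. ennreal ((q^k*Rrad n \<delta>) powr (-2*c*n) * exp (n/3)
            * exp (-(n/(3*(q^(k+1)*Rrad n \<delta>)^2)) * (\<Sum>j<n. (x j)^2))))"
proof (cases "vnorm n x > Rrad n \<delta>")
  case False
  then show ?thesis by (simp add: fcd_def)
next
  case True
  define R where "R = Rrad n \<delta>"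
  define N where "N = vnorm n x"
  have R: "R > 0" using Rrad_pos[OF d] by (simp add: R_def)
  have NR: "N > R" using True by (simp add: N_def R_def)
  have N: "N > 0" using NR R by simp
  define L where "L = log q (N/R)"
  have L0: "L > 0" using NR R q by (simp add: L_def)
  define k where "k = nat \<lfloor>L\<rfloor>"
  have k1: "real k \<le> L" using L0 by (simp add: k_def)
  have k2: "L < real k + 1" using L0 by (simp add: k_def)
  have qL: "q powr L = N/R" using q N R by (simp add: L_def)
  have lo: "q^k * R \<le> N"
  proof -
    have "q^k = q powr real k" using q by (simp add: powr_realpow)
    also have "\<dots> \<le> q powr L" using q k1 by (intro powr_mono) auto
    finally show ?thesis using qL R by (simp add: field_simps)
  qed
  have hi: "N < q^(k+1) * R"
  proof -
    have "N/R = q powr L" using qL by simp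
    also have "\<dots> < q powr (real k + 1)" using q k2 by (intro powr_less_mono) auto
    also have "\<dots> = q^(k+1)" using q powr_realpow[of q "k+1"] by (simp add: add.commute)
    finally show ?thesis using R by (simp add: field_simps)
  qed
  have qkR: "q^k * R > 0" using q R by simp
  have A: "fcd c \<delta> n x \<le> (q^k*R) powr (-2*c*n)"
    using True c n lo qkR unfolding fcd_def N_def[symmetric] R_def[symmetric]
    by (auto intro!: powr_mono2')
  have B: "1 \<le> exp (n/3) * exp (-(n/(3*(q^(k+1)*R)^2)) * (\<Sum>j<n. (x j)^2))"
  proof -
    have s: "(\<Sum>j<n. (x j)^2) = N^2" using vnorm_sq[of n x] by (simp add: N_def)
    have "N^2 \<le> (q^(k+1)*R)^2" using hi N by (intro power_mono) auto
    then have "(n/(3*(q^(k+1)*R)^2)) * N^2 \<le> n/3"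
      using qkR q R by (simp add: field_simps mult_left_mono)
    then show ?thesis unfolding s exp_add[symmetric] by simp
  qed
  define g where "g = (\<lambda>k. ennreal ((q^k*R) powr (-2*c*n) * exp (n/3)
            * exp (-(n/(3*(q^(k+1)*R)^2)) * (\<Sum>j<n. (x j)^2))))"
  have "fcd c \<delta> n x \<le> (q^k*R) powr (-2*c*n) * exp (n/3) * exp (-(n/(3*(q^(k+1)*R)^2)) * (\<Sum>j<n. (x j)^2))"
    using A B mult_left_mono[OF B, of "(q^k*R) powr (-2*c*n)"] by (simp add: mult.assoc)
  then have "ennreal (fcd c \<delta> n x) \<le> g k" unfolding g_def by (intro ennreal_leI) (simp add: mult.assoc)
  also have "g k \<le> (\<Sum>i. g i)" using sum_le_suminf[OF summableI, of "{k}" g] by simp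
  finally show ?thesis by (simp add: g_def R_def)
qed

lemma sf_Rn: "sigma_finite_measure (Rn_measure n)"
  unfolding Rn_measure_def
proof -
  interpret product_sigma_finite "\<lambda>_::nat. lborel" by standard
  interpret finite_product_sigma_finite "\<lambda>_::nat. lborel" "{..<n}" by standard simp
  show "sigma_finite_measure (Pi\<^sub>M {..<n} (\<lambda>_. lborel))" by (rule sigma_finite_measure_axioms)
qed

lemma meas_test:
  fixes y :: "nat \<Rightarrow> real"
  shows "(\<lambda>x1. \<integral>\<^sup>+x2. ennreal (a * exp (-(l1*(\<Sum>j<n. (x1 j)^2) + l2*(\<Sum>j<n. (x2 j)^2) + l3*(\<Sum>j<n. (e*(x1 j + x2 j) + y j)^2)))) \<partial>Rn_measure n) \<in> borel_measurable (Rn_measure n)"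
proof -
  interpret sigma_finite_measure "Pi\<^sub>M {..<n} (\<lambda>_::nat. lborel::real measure)" using sf_Rn[of n] by (simp add: Rn_measure_def)
  show ?thesis unfolding Rn_measure_def by measurable
qed

lemma suminf3_int:
  fixes T :: "nat \<Rightarrow> nat \<Rightarrow> nat \<Rightarrow> 'a \<Rightarrow> ennreal"
  assumes [measurable]: "\<And>i j k. T i j k \<in> borel_measurable M"
  shows "(\<integral>\<^sup>+x. (\<Sum>i. \<Sum>j. \<Sum>k. T i j k x) \<partial>M) = (\<Sum>i. \<Sum>j. \<Sum>k. \<integral>\<^sup>+x. T i j k x \<partial>M)"
  by (subst nn_integral_suminf; (subst nn_integral_suminf)?; (subst nn_integral_suminf)?; simp?; measurable?)+

lemma suminf3_le:
  fixes F G :: "nat \<Rightarrow> nat \<Rightarrow> nat \<Rightarrow> ennreal"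
  assumes "\<And>i j k. F i j k \<le> G i j k"
  shows "(\<Sum>i. \<Sum>j. \<Sum>k. F i j k) \<le> (\<Sum>i. \<Sum>j. \<Sum>k. G i j k)"
  by (intro suminf_le summableI allI assms)

lemma suminf3_mult:
  fixes u v w :: "nat \<Rightarrow> ennreal"
  shows "(\<Sum>i. u i) * (\<Sum>j. v j) * (\<Sum>k. w k) = (\<Sum>i. \<Sum>j. \<Sum>k. u i * v j * w k)"
  by simp

definition ak :: "real \<Rightarrow> real \<Rightarrow> real \<Rightarrow> nat \<Rightarrow> nat \<Rightarrow> real" where
  "ak c \<delta> q n k = (q^k * Rrad n \<delta>) powr (-2*c*n) * exp (n/3)"

definition lk :: "real \<Rightarrow> real \<Rightarrow> nat \<Rightarrow> nat \<Rightarrow> real" where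
  "lk \<delta> q n k = n/(3*(q^(k+1)*Rrad n \<delta>)^2)"

lemma lk_pos: "\<delta> > 0 \<Longrightarrow> q > 1 \<Longrightarrow> n \<ge> 1 \<Longrightarrow> lk \<delta> q n k > 0"
  unfolding lk_def using Rrad_pos[of \<delta> n] by (auto intro!: divide_pos_pos)

lemma ak_nonneg: "ak c \<delta> q n k \<ge> 0"
  unfolding ak_def by simp

lemma main_int:
  fixes c \<delta> q e :: real and n :: nat and y :: "nat \<Rightarrow> real"
  assumes c: "c > 0" and d: "\<delta> > 0" and q: "q > 1" and n: "n \<ge> 1" and e: "e*e = 1"
  shows "(\<integral>\<^sup>+x1. \<integral>\<^sup>+x2. ennreal (fcd c \<delta> n x1 * fcd c \<delta> n x2 * fcd c \<delta> n (\<lambda>j. e*(x1 j + x2 j) + y j))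
           \<partial>Rn_measure n \<partial>Rn_measure n)
    \<le> (\<Sum>i. \<Sum>j. \<Sum>k. ennreal (ak c \<delta> q n i * ak c \<delta> q n j * ak c \<delta> q n k *
          (pi / sqrt (lk \<delta> q n i * lk \<delta> q n j + lk \<delta> q n i * lk \<delta> q n k + lk \<delta> q n j * lk \<delta> q n k))^n))"
proof -
  interpret sigma_finite_measure "Pi\<^sub>M {..<n} (\<lambda>_::nat. lborel::real measure)" using sf_Rn[of n] by (simp add: Rn_measure_def)
  define a where "a = ak c \<delta> q n"
  define l where "l = lk \<delta> q n"
  define S where "S = (\<lambda>x::nat\<Rightarrow>real. \<Sum>j<n. (x j)^2)"
  define T where "T = (\<lambda>i j k (x1::nat\<Rightarrow>real) (x2::nat\<Rightarrow>real). ennreal (a i * a j * a k *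
       exp (-(l i*(\<Sum>j<n. (x1 j)^2) + l j*(\<Sum>j<n. (x2 j)^2) + l k*(\<Sum>j<n. (e*(x1 j + x2 j) + y j)^2)))))"
  have fb: "ennreal (fcd c \<delta> n x) \<le> (\<Sum>k. ennreal (a k * exp (-(l k) * S x)))" for x
    using fcd_sum_bound[OF c d q n, of x] by (simp add: a_def l_def ak_def lk_def S_def mult.assoc)
  have pw: "ennreal (fcd c \<delta> n x1 * fcd c \<delta> n x2 * fcd c \<delta> n (\<lambda>j. e*(x1 j + x2 j) + y j))
      \<le> (\<Sum>i. \<Sum>j. \<Sum>k. T i j k x1 x2)" for x1 x2
  proof -
    have "ennreal (fcd c \<delta> n x1 * fcd c \<delta> n x2 * fcd c \<delta> n (\<lambda>j. e*(x1 j + x2 j) + y j))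
       = ennreal (fcd c \<delta> n x1) * ennreal (fcd c \<delta> n x2) * ennreal (fcd c \<delta> n (\<lambda>j. e*(x1 j + x2 j) + y j))"
      by (simp add: ennreal_mult fcd_def)
    also have "\<dots> \<le> (\<Sum>i. ennreal (a i * exp (-(l i) * S x1))) * (\<Sum>j. ennreal (a j * exp (-(l j) * S x2)))
        * (\<Sum>k. ennreal (a k * exp (-(l k) * S (\<lambda>j. e*(x1 j + x2 j) + y j))))"
      by (intro mult_mono fb) auto
    also have "\<dots> = (\<Sum>i. \<Sum>j. \<Sum>k. ennreal (a i * exp (-(l i) * S x1)) * ennreal (a j * exp (-(l j) * S x2))
        * ennreal (a k * exp (-(l k) * S (\<lambda>j. e*(x1 j + x2 j) + y j))))"
      by (rule suminf3_mult)
    also have "\<dots> = (\<Sum>i. \<Sum>j. \<Sum>k. T i j k x1 x2)"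
    proof -
      have "ennreal (a i * exp (-(l i) * S x1)) * ennreal (a j * exp (-(l j) * S x2))
        * ennreal (a k * exp (-(l k) * S (\<lambda>j. e*(x1 j + x2 j) + y j))) = T i j k x1 x2" for i j k
      proof -
        have "a i * exp (-(l i) * S x1) * (a j * exp (-(l j) * S x2)) * (a k * exp (-(l k) * S (\<lambda>j. e*(x1 j + x2 j) + y j)))
          = a i * a j * a k * exp (-(l i*(\<Sum>j<n. (x1 j)^2) + l j*(\<Sum>j<n. (x2 j)^2) + l k*(\<Sum>j<n. (e*(x1 j + x2 j) + y j)^2)))"
          by (simp add: S_def exp_add[symmetric] exp_diff algebra_simps)
        then show ?thesis unfolding T_def
          by (simp add: ennreal_mult[symmetric] a_def ak_nonneg)
      qed
      then show ?thesis by simp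
    qed
    finally show ?thesis .
  qed
  have "(\<integral>\<^sup>+x1. \<integral>\<^sup>+x2. ennreal (fcd c \<delta> n x1 * fcd c \<delta> n x2 * fcd c \<delta> n (\<lambda>j. e*(x1 j + x2 j) + y j))
           \<partial>Rn_measure n \<partial>Rn_measure n)
     \<le> (\<integral>\<^sup>+x1. \<integral>\<^sup>+x2. (\<Sum>i. \<Sum>j. \<Sum>k. T i j k x1 x2) \<partial>Rn_measure n \<partial>Rn_measure n)"
    by (intro nn_integral_mono pw)
  also have "\<dots> = (\<integral>\<^sup>+x1. (\<Sum>i. \<Sum>j. \<Sum>k. \<integral>\<^sup>+x2. T i j k x1 x2 \<partial>Rn_measure n) \<partial>Rn_measure n)"
    by (intro nn_integral_cong suminf3_int) (simp add: T_def Rn_measure_def)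
  also have "\<dots> = (\<Sum>i. \<Sum>j. \<Sum>k. \<integral>\<^sup>+x1. \<integral>\<^sup>+x2. T i j k x1 x2 \<partial>Rn_measure n \<partial>Rn_measure n)"
    by (intro suminf3_int) (simp add: T_def Rn_measure_def)
  also have "\<dots> \<le> (\<Sum>i. \<Sum>j. \<Sum>k. ennreal (a i * a j * a k * (pi / sqrt (l i * l j + l i * l k + l j * l k))^n))"
  proof (rule suminf3_le)
    fix i j k
    have lp: "l i > 0" "l j > 0" "l k > 0" using lk_pos[OF d q n] by (auto simp: l_def)
    have "(\<integral>\<^sup>+x1. \<integral>\<^sup>+x2. T i j k x1 x2 \<partial>Rn_measure n \<partial>Rn_measure n)
       = ennreal (a i * a j * a k) * (\<integral>\<^sup>+x1. \<integral>\<^sup>+x2. ennreal (exp (-(l i*(\<Sum>j<n. (x1 j)^2) + l j*(\<Sum>j<n. (x2 j)^2) + l k*(\<Sum>j<n. (e*(x1 j + x2 j) + y j)^2)))) \<partial>Rn_measure n \<partial>Rn_measure n)"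
      unfolding T_def
      apply (subst nn_integral_cmult[symmetric])
       apply (simp add: Rn_measure_def)
      apply (rule nn_integral_cong)
      apply (subst nn_integral_cmult[symmetric])
       apply (simp add: Rn_measure_def)
      apply (rule nn_integral_cong)
      apply (simp add: ennreal_mult a_def ak_nonneg)
      done
    also have "\<dots> \<le> ennreal (a i * a j * a k) * ennreal ((pi / sqrt (l i * l j + l i * l k + l j * l k))^n)"
      by (intro mult_left_mono gauss_pair lp e) auto
    also have "\<dots> = ennreal (a i * a j * a k * (pi / sqrt (l i * l j + l i * l k + l j * l k))^n)"
      using lp by (simp add: ennreal_mult[symmetric] a_def ak_nonneg)
    finally show "(\<integral>\<^sup>+x1. \<integral>\<^sup>+x2. T i j k x1 x2 \<partial>Rn_measure n \<partial>Rn_measure n) \<le> ennreal (a i * a j * a k * (pi / sqrt (l i * l j + l i * l k + l j * l k))^n)" .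
  qed
  finally show ?thesis by (simp add: a_def l_def)
qed

lemma amgm3:
  fixes u v w :: real assumes "u > 0" "v > 0" "w > 0"
  shows "3 * (u * v * w) powr (1/3) \<le> u + v + w"
proof -
  define \<alpha> where "\<alpha> = u powr (1/3)"
  define \<beta> where "\<beta> = v powr (1/3)"
  define \<gamma> where "\<gamma> = w powr (1/3)"
  have p: "\<alpha> > 0" "\<beta> > 0" "\<gamma> > 0" using assms by (auto simp: \<alpha>_def \<beta>_def \<gamma>_def)
  have cube: "x > 0 \<Longrightarrow> (x powr (1/3))^3 = x" for x :: real
    by (simp add: powr_realpow[symmetric] powr_powr)
  have u: "u = \<alpha>^3" and v: "v = \<beta>^3" and w: "w = \<gamma>^3" using cube assms by (auto simp: \<alpha>_def \<beta>_def \<gamma>_def)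
  have m: "(u * v * w) powr (1/3) = \<alpha>*\<beta>*\<gamma>" using assms by (simp add: \<alpha>_def \<beta>_def \<gamma>_def powr_mult)
  have "0 \<le> (\<alpha>+\<beta>+\<gamma>) * ((\<alpha>-\<beta>)^2 + (\<beta>-\<gamma>)^2 + (\<gamma>-\<alpha>)^2)" using p by (intro mult_nonneg_nonneg) auto
  also have "\<dots> = 2*(\<alpha>^3+\<beta>^3+\<gamma>^3 - 3*(\<alpha>*\<beta>*\<gamma>))" by (simp add: power2_eq_square power3_eq_cube algebra_simps)
  finally have "3*(\<alpha>*\<beta>*\<gamma>) \<le> \<alpha>^3+\<beta>^3+\<gamma>^3" by simp
  then show ?thesis unfolding m by (simp add: u v w)
qed

lemma sigma_bound:
  fixes l1 l2 l3 :: real assumes p: "l1 > 0" "l2 > 0" "l3 > 0"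
  shows "(pi / sqrt (l1*l2 + l1*l3 + l2*l3))^n \<le> (pi / sqrt 3)^n * (l1 powr (-(real n)/3) * l2 powr (-(real n)/3) * l3 powr (-(real n)/3))"
proof -
  define P where "P = l1*l2*l3"
  define Q where "Q = P powr (1/3)"
  have P: "P > 0" using p by (simp add: P_def)
  have Q: "Q > 0" using P by (simp add: Q_def)
  have "(l1*l2)*(l1*l3)*(l2*l3) = P^2" by (simp add: P_def power2_eq_square algebra_simps)
  then have "3 * (P^2) powr (1/3) \<le> l1*l2 + l1*l3 + l2*l3" using amgm3[of "l1*l2" "l1*l3" "l2*l3"] p by simp
  moreover have "(P^2) powr (1/3) = Q^2"
    unfolding Q_def using P by (simp add: powr_def power2_eq_square exp_add[symmetric] ln_mult)
  ultimately have "3 * Q^2 \<le> l1*l2 + l1*l3 + l2*l3" by simp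
  then have "sqrt (3 * Q^2) \<le> sqrt (l1*l2 + l1*l3 + l2*l3)" by (rule real_sqrt_le_mono)
  moreover have "sqrt (3 * Q^2) = sqrt 3 * Q" using Q by (simp add: real_sqrt_mult)
  ultimately have s: "sqrt 3 * Q \<le> sqrt (l1*l2 + l1*l3 + l2*l3)" by simp
  have pos: "sqrt 3 * Q > 0" using Q by simp
  have "pi / sqrt (l1*l2 + l1*l3 + l2*l3) \<le> pi / (sqrt 3 * Q)"
    by (rule divide_left_mono[OF s]) (use pos s p in \<open>auto intro!: mult_pos_pos add_pos_pos\<close>)
  also have "\<dots> = (pi / sqrt 3) * P powr (-1/3)" unfolding Q_def using P by (simp add: powr_minus_divide)
  finally have "(pi / sqrt (l1*l2 + l1*l3 + l2*l3))^n \<le> ((pi / sqrt 3) * P powr (-1/3))^n"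
    using p by (intro power_mono) (auto intro!: divide_nonneg_nonneg add_nonneg_nonneg mult_nonneg_nonneg)
  also have "\<dots> = (pi / sqrt 3)^n * P powr (-(real n)/3)"
  proof -
    have "(P powr (-1/3))^n = P powr (-(real n)/3)" using P
      by (simp add: powr_def exp_of_nat_mult[symmetric])
    then show ?thesis by (simp only: power_mult_distrib)
  qed
  also have "P powr (-(real n)/3) = l1 powr (-(real n)/3) * l2 powr (-(real n)/3) * l3 powr (-(real n)/3)"
    using p by (simp add: P_def powr_mult)
  finally show ?thesis .
qed

definition b0 :: "real \<Rightarrow> real \<Rightarrow> real \<Rightarrow> nat \<Rightarrow> real" where
  "b0 c \<delta> q n = exp (n/3) * (3/n) powr (n/3) * q powr (2*n/3) * Rrad n \<delta> powr (2*n/3 - 2*c*n)"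

definition zq :: "real \<Rightarrow> real \<Rightarrow> nat \<Rightarrow> real" where
  "zq c q n = q powr (-(2*c - 2/3)*n)"

lemma ak_lk:
  assumes d: "\<delta> > 0" and q: "q > 1" and n: "n \<ge> 1"
  shows "ak c \<delta> q n k * lk \<delta> q n k powr (-(real n)/3) = b0 c \<delta> q n * zq c q n ^ k"
proof -
  define R where "R = Rrad n \<delta>"
  have R: "R > 0" using Rrad_pos[OF d] by (simp add: R_def)
  have q0: "q > 0" using q by simp
  have n0: "real n > 0" using n by simp
  have L: "ak c \<delta> q n k * lk \<delta> q n k powr (-(real n)/3)
     = exp ((-2*c*n)*(k*ln q + ln R) + n/3 + (-(real n)/3)*(ln n - ln 3 - 2*((k+1)*ln q + ln R)))"
    using R q0 n0 unfolding ak_def lk_def R_def[symmetric]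
    by (simp add: powr_def ln_mult ln_div ln_realpow flip: exp_add, simp add: algebra_simps)
  have Rt: "b0 c \<delta> q n * zq c q n ^ k
     = exp (n/3 + (n/3)*(ln 3 - ln n) + (2*n/3)*ln q + (2*n/3 - 2*c*n)*ln R + k*((-(2*c - 2/3)*n)*ln q))"
    using R q0 n0 unfolding b0_def zq_def R_def[symmetric]
    by (simp add: powr_def ln_div exp_add exp_of_nat_mult[symmetric])
  have E: "exp ((-2*c*n)*(k*ln q + ln R) + n/3 + (-(real n)/3)*(ln n - ln 3 - 2*((k+1)*ln q + ln R)))
     = exp (n/3 + (n/3)*(ln 3 - ln n) + (2*n/3)*ln q + (2*n/3 - 2*c*n)*ln R + k*((-(2*c - 2/3)*n)*ln q))"
    by (rule arg_cong[where f=exp]) (simp add: algebra_simps)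
  show ?thesis using L Rt E by simp
qed

lemma zq_bounds:
  assumes c: "c > 1/3" and q: "q > 1" and n: "n \<ge> 1"
  shows "0 < zq c q n" "zq c q n \<le> zq c q 1" "zq c q 1 < 1"
proof -
  show "0 < zq c q n" using q by (simp add: zq_def)
  show "zq c q n \<le> zq c q 1" unfolding zq_def using q c n
    by (intro powr_mono) (auto simp: mult_le_cancel_left1)
  show "zq c q 1 < 1" unfolding zq_def using q c
    by (intro powr_less_one) auto
qed

lemma geom_ennreal:
  fixes z :: real assumes "0 \<le> z" "z < 1"
  shows "(\<Sum>i. ennreal (z^i)) = ennreal (1/(1-z))"
proof -
  have "(\<lambda>i. z^i) sums (1/(1-z))" using assms geometric_sums[of z] by simp
  then have "(\<lambda>i. ennreal (z^i)) sums ennreal (1/(1-z))" using assms by (subst sums_ennreal) auto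
  then show ?thesis by (simp add: sums_iff)
qed

lemma triple_sum_bound:
  assumes c: "c > 1/3" and d: "\<delta> > 0" and q: "q > 1" and n: "n \<ge> 1"
  shows "(\<Sum>i. \<Sum>j. \<Sum>k. ennreal (ak c \<delta> q n i * ak c \<delta> q n j * ak c \<delta> q n k *
          (pi / sqrt (lk \<delta> q n i * lk \<delta> q n j + lk \<delta> q n i * lk \<delta> q n k + lk \<delta> q n j * lk \<delta> q n k))^n))
     \<le> ennreal ((pi / sqrt 3)^n * b0 c \<delta> q n ^ 3 * (1/(1 - zq c q n))^3)"
proof -
  define z where "z = zq c q n"
  define C where "C = (pi / sqrt 3)^n * b0 c \<delta> q n ^ 3"
  have z: "0 < z" "z < 1" using zq_bounds[OF c q n] by (auto simp: z_def)
  have b0: "b0 c \<delta> q n \<ge> 0" unfolding b0_def by simp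
  have C: "C \<ge> 0" using b0 by (simp add: C_def)
  have "(\<Sum>i. \<Sum>j. \<Sum>k. ennreal (ak c \<delta> q n i * ak c \<delta> q n j * ak c \<delta> q n k *
          (pi / sqrt (lk \<delta> q n i * lk \<delta> q n j + lk \<delta> q n i * lk \<delta> q n k + lk \<delta> q n j * lk \<delta> q n k))^n))
     \<le> (\<Sum>i. \<Sum>j. \<Sum>k. ennreal C * (ennreal (z^i) * ennreal (z^j) * ennreal (z^k)))"
  proof (rule suminf3_le)
    fix i j k
    let ?a = "ak c \<delta> q n" and ?l = "lk \<delta> q n"
    have lp: "?l i > 0" "?l j > 0" "?l k > 0" using lk_pos[OF d q n] by auto
    have ap: "?a i * ?a j * ?a k \<ge> 0" by (simp add: ak_nonneg)
    have "?a i * ?a j * ?a k * (pi / sqrt (?l i * ?l j + ?l i * ?l k + ?l j * ?l k))^n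
        \<le> ?a i * ?a j * ?a k * ((pi / sqrt 3)^n * (?l i powr (-(real n)/3) * ?l j powr (-(real n)/3) * ?l k powr (-(real n)/3)))"
      by (intro mult_left_mono sigma_bound lp ap)
    also have "\<dots> = (pi / sqrt 3)^n * ((?a i * ?l i powr (-(real n)/3)) * (?a j * ?l j powr (-(real n)/3)) * (?a k * ?l k powr (-(real n)/3)))"
      by (simp add: algebra_simps)
    also have "\<dots> = C * (z^i * z^j * z^k)"
      unfolding ak_lk[OF d q n] C_def z_def by (simp add: algebra_simps power3_eq_cube)
    finally show "ennreal (?a i * ?a j * ?a k * (pi / sqrt (?l i * ?l j + ?l i * ?l k + ?l j * ?l k))^n)
        \<le> ennreal C * (ennreal (z^i) * ennreal (z^j) * ennreal (z^k))"
      using z C by (simp add: ennreal_mult[symmetric] ennreal_leI)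
  qed
  also have "\<dots> = ennreal C * ((\<Sum>i. ennreal (z^i)) * (\<Sum>i. ennreal (z^i)) * (\<Sum>i. ennreal (z^i)))"
    by (simp only: ennreal_suminf_cmult suminf3_mult)
  also have "\<dots> = ennreal (C * (1/(1-z))^3)"
    unfolding geom_ennreal[of z, OF less_imp_le[OF z(1)] z(2)]
    using z C by (simp add: ennreal_mult[symmetric] power3_eq_cube)
  finally show ?thesis by (simp add: C_def z_def)
qed

lemma exp_density_int: "(\<integral>\<^sup>+t. ennreal (exponential_density (1/20) t) \<partial>lborel) = 1"
proof -
  interpret prob_space "density lborel (exponential_density (1/20))"
    by (rule prob_space_exponential_density) simp
  have "emeasure (density lborel (exponential_density (1/20))) UNIV = 1"
    using emeasure_space_1 by simp
  then show ?thesis by (simp add: emeasure_density)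
qed

lemma pt_gamma:
  fixes x t :: real assumes x: "x > 0" and t: "t \<ge> 0"
  shows "t powr x * exp (-(19/20)*t) \<le> (x/(19/20*exp 1)) powr x"
proof (cases "t = 0")
  case True then show ?thesis using x by simp
next
  case False
  then have t0: "t > 0" using t by simp
  define \<beta> :: real where "\<beta> = 19/20"
  have b: "\<beta> > 0" by (simp add: \<beta>_def)
  have u: "ln (\<beta>*t/x) \<le> \<beta>*t/x - 1" using b t0 x by (intro ln_le_minus_one) auto
  have "x * ln (\<beta>*t/x) \<le> x * (\<beta>*t/x - 1)" using u x by (intro mult_left_mono) auto
  then have key: "x * ln t - \<beta>*t \<le> x * (ln x - ln \<beta> - 1)"
    using b t0 x by (simp add: ln_mult ln_div algebra_simps)
  have "t powr x * exp (-\<beta>*t) = exp (x * ln t - \<beta>*t)" using t0 by (simp add: powr_def exp_diff exp_minus field_simps)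
  also have "\<dots> \<le> exp (x * (ln x - ln \<beta> - 1))" using key by simp
  also have "\<dots> = (x/(\<beta>*exp 1)) powr x" using x b by (simp add: powr_def ln_div ln_mult algebra_simps)
  finally show ?thesis by (simp add: \<beta>_def)
qed

lemma gamma_bound:
  fixes x :: real assumes x: "x > 0"
  shows "Gamma (x+1) \<le> 20 * (x/(19/20*exp 1)) powr x"
proof -
  define K where "K = (x/(19/20*exp 1)) powr x"
  have pw: "indicator {0..} t * t powr (x+1-1) / exp t \<le> K * 20 * exponential_density (1/20) t" for t :: real
  proof (cases "t \<ge> 0")
    case True
    have "t powr x / exp t = (t powr x * exp (-(19/20)*t)) * exp (-t/20)"
      by (simp add: exp_add[symmetric] exp_minus field_simps)
    also have "\<dots> \<le> K * exp (-t/20)" unfolding K_def using pt_gamma[OF x True] by (intro mult_right_mono) auto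
    finally show ?thesis using True by (simp add: exponential_density_def indicator_def mult_ac)
  next
    case False then show ?thesis by (simp add: exponential_density_def indicator_def)
  qed
  have "ennreal (Gamma (x+1)) = (\<integral>\<^sup>+t. ennreal (indicator {0..} t * t powr (x+1-1) / exp t) \<partial>lborel)"
    using Gamma_conv_nn_integral_real[of "x+1"] x by simp
  also have "\<dots> \<le> (\<integral>\<^sup>+t. ennreal (K * 20) * ennreal (exponential_density (1/20) t) \<partial>lborel)"
    using pw by (intro nn_integral_mono) (auto simp: K_def ennreal_mult[symmetric] exponential_density_nonneg intro!: ennreal_leI)
  also have "\<dots> = ennreal (K * 20)" by (simp add: nn_integral_cmult exp_density_int)
  finally show ?thesis using x unfolding K_def by (subst (asm) ennreal_le_iff) (auto simp: mult.commute)
qed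

lemma pow_exp_ln: "x > 0 \<Longrightarrow> x ^ k = exp (real k * ln x)"
  by (simp add: exp_of_nat_mult)

lemma A_eq:
  fixes c \<delta> q :: real and n l :: nat
  assumes d: "\<delta> > 0" and q: "q > 0" and n: "n \<ge> 1" and l: "l \<ge> 3"
  shows "ball_vol n powr (-2*real l*c) * (Rrad n \<delta> powr (-2*c*real n))^(l-3) * (pi/sqrt 3)^n * b0 c \<delta> q n ^ 3
       = \<delta> powr (2-2*real l*c) * Gamma (real n/2+1)^2 * (sqrt 3 * exp 1 * q^2/real n)^n"
proof -
  define V where "V = ball_vol n"
  define G where "G = Gamma (real n/2+1)"
  have V: "V > 0" using ball_vol_pos by (simp add: V_def)
  have G: "G > 0" unfolding G_def by (intro Gamma_real_pos) simp
  have n0: "real n > 0" using n by simp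
  have LV: "ln V = (real n/2) * ln pi - ln G"
    unfolding V_def ball_vol_def G_def[symmetric] using G by (simp add: ln_div powr_def)
  have lR: "ln (Rrad n \<delta>) = (ln \<delta> - ln V)/real n"
    unfolding Rrad_def V_def[symmetric] using V d by (simp add: powr_def ln_div)
  have R: "Rrad n \<delta> > 0" using Rrad_pos[OF d] .
  have f1: "V powr (-2*real l*c) = exp ((-2*real l*c) * ln V)" using V by (simp add: powr_def)
  have f2: "(Rrad n \<delta> powr (-2*c*real n))^(l-3) = exp ((real l - 3) * ((-2*c*real n) * ((ln \<delta> - ln V)/real n)))"
    using R l by (simp add: pow_exp_ln powr_def lR of_nat_diff)
  have f3: "(pi/sqrt 3)^n = exp (real n * (ln pi - ln (sqrt 3)))"
    by (simp add: pow_exp_ln ln_div)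
  have f4: "b0 c \<delta> q n ^ 3 = exp (3 * (real n/3 + (real n/3)*(ln 3 - ln (real n)) + (2*real n/3)*ln q
        + (2*real n/3 - 2*c*real n)*((ln \<delta> - ln V)/real n)))"
    unfolding b0_def using R q n0 by (simp add: pow_exp_ln powr_def lR ln_mult ln_div exp_add[symmetric])
  have g1: "\<delta> powr (2-2*real l*c) = exp ((2-2*real l*c) * ln \<delta>)" using d by (simp add: powr_def)
  have g2: "G^2 = exp (2 * ln G)" using G pow_exp_ln[OF G, of 2] by simp
  have g3: "(sqrt 3 * exp 1 * q^2/real n)^n = exp (real n * (ln (sqrt 3) + 1 + 2*ln q - ln (real n)))"
    using q n0 by (simp add: pow_exp_ln ln_mult ln_div ln_realpow)
  have s3: "ln (sqrt 3) = ln 3 / 2" by (simp add: ln_sqrt)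
  have E: "exp ((-2*real l*c) * ln V) * exp ((real l - 3) * ((-2*c*real n) * ((ln \<delta> - ln V)/real n)))
        * exp (real n * (ln pi - ln (sqrt 3))) * exp (3 * (real n/3 + (real n/3)*(ln 3 - ln (real n)) + (2*real n/3)*ln q
        + (2*real n/3 - 2*c*real n)*((ln \<delta> - ln V)/real n)))
     = exp ((2-2*real l*c) * ln \<delta>) * exp (2 * ln G) * exp (real n * (ln (sqrt 3) + 1 + 2*ln q - ln (real n)))"
    unfolding exp_add[symmetric]
  proof (rule arg_cong[where f=exp])
    show "-2 * real l * c * ln V + (real l - 3) * (-2 * c * real n * ((ln \<delta> - ln V) / real n)) +
        real n * (ln pi - ln (sqrt 3)) +
        3 * (real n / 3 + real n / 3 * (ln 3 - ln (real n)) + 2 * real n / 3 * ln q +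
             (2 * real n / 3 - 2 * c * real n) * ((ln \<delta> - ln V) / real n)) =
        (2 - 2 * real l * c) * ln \<delta> + 2 * ln G + real n * (ln (sqrt 3) + 1 + 2 * ln q - ln (real n))"
      unfolding LV s3 using n0 by (simp add: field_simps)
  qed
  show ?thesis unfolding V_def[symmetric] G_def[symmetric] f1 f2 f3 f4 g1 g2 g3 E ..
qed

lemma fcd_nonneg: "fcd c \<delta> n x \<ge> 0"
  unfolding fcd_def by simp

lemma fcd_le: assumes "c > 0" "\<delta> > 0" shows "fcd c \<delta> n x \<le> Rrad n \<delta> powr (-2*c*real n)"
  unfolding fcd_def using assms Rrad_pos[of \<delta> n]
  by (auto intro!: powr_mono2' mult_nonneg_nonneg)

lemma prod_le_M:
  fixes g :: "nat \<Rightarrow> real"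
  assumes "finite S" "\<And>i. i \<in> S \<Longrightarrow> 0 \<le> g i \<and> g i \<le> M"
  shows "prod g S \<le> M ^ card S"
proof -
  have "prod g S \<le> prod (\<lambda>_. M) S" by (rule prod_mono) (use assms in auto)
  then show ?thesis by simp
qed

lemma F_bound:
  fixes c \<delta> :: real and l l1 l2 l3 n :: nat and \<epsilon> :: "nat \<Rightarrow> real" and y :: "nat \<Rightarrow> nat \<Rightarrow> real"
  assumes c: "c > 0" and d: "\<delta> > 0" and l: "l \<ge> 3"
    and "l1 \<ge> 1" and "l2 \<ge> 1" and "l3 \<ge> 1" and sum: "l1 + l2 + l3 = l"
  shows "fcd c \<delta> n x1 * (\<Prod>i\<in>{1..l1-1}. fcd c \<delta> n (\<lambda>j. \<epsilon> i * x1 j + y i j))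
           * fcd c \<delta> n x2 * (\<Prod>i\<in>{l1..l1+l2-2}. fcd c \<delta> n (\<lambda>j. \<epsilon> i * x2 j + y i j))
           * (\<Prod>i\<in>{l1+l2-1..l-2}. fcd c \<delta> n (\<lambda>j. \<epsilon> i * (x1 j + x2 j) + y i j))
      \<le> (Rrad n \<delta> powr (-2*c*real n))^(l-3) *
         (fcd c \<delta> n x1 * fcd c \<delta> n x2 * fcd c \<delta> n (\<lambda>j. \<epsilon> (l-2) * (x1 j + x2 j) + y (l-2) j))"
proof -
  define M where "M = Rrad n \<delta> powr (-2*c*real n)"
  define f where "f = fcd c \<delta> n"
  define T where "T = {l1+l2-1..l-2}"
  have fb: "0 \<le> f x \<and> f x \<le> M" for x unfolding f_def M_def using fcd_nonneg fcd_le[OF c d] by auto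
  have M0: "M \<ge> 0" unfolding M_def by simp
  have lT: "l-2 \<in> T" unfolding T_def using assms by auto
  have cT: "card (T - {l-2}) = l3 - 1" using lT assms by (simp add: T_def)
  have P1: "(\<Prod>i\<in>{1..l1-1}. f (\<lambda>j. \<epsilon> i * x1 j + y i j)) \<le> M^(l1-1)"
    using prod_le_M[of "{1..l1-1}" "\<lambda>i. f (\<lambda>j. \<epsilon> i * x1 j + y i j)" M] fb by simp
  have P2: "(\<Prod>i\<in>{l1..l1+l2-2}. f (\<lambda>j. \<epsilon> i * x2 j + y i j)) \<le> M^(l2-1)"
    using prod_le_M[of "{l1..l1+l2-2}" "\<lambda>i. f (\<lambda>j. \<epsilon> i * x2 j + y i j)" M] fb assms
    by (simp add: Suc_diff_le)
  have P3: "(\<Prod>i\<in>T. f (\<lambda>j. \<epsilon> i * (x1 j + x2 j) + y i j))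
      = f (\<lambda>j. \<epsilon> (l-2) * (x1 j + x2 j) + y (l-2) j) * (\<Prod>i\<in>T-{l-2}. f (\<lambda>j. \<epsilon> i * (x1 j + x2 j) + y i j))"
    using lT by (intro prod.remove) (auto simp: T_def)
  have P3': "(\<Prod>i\<in>T-{l-2}. f (\<lambda>j. \<epsilon> i * (x1 j + x2 j) + y i j)) \<le> M^(l3-1)"
    using prod_le_M[of "T-{l-2}" "\<lambda>i. f (\<lambda>j. \<epsilon> i * (x1 j + x2 j) + y i j)" M] fb cT by (simp add: T_def)
  have nn: "0 \<le> (\<Prod>i\<in>S. f (h i))" for S h by (intro prod_nonneg) (use fb in auto)
  define a where "a = f x1"
  define b where "b = f x2"
  define w where "w = f (\<lambda>j. \<epsilon> (l-2) * (x1 j + x2 j) + y (l-2) j)"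
  have ab: "a \<ge> 0" "b \<ge> 0" "w \<ge> 0" using fb by (auto simp: a_def b_def w_def)
  have "f x1 * (\<Prod>i\<in>{1..l1-1}. f (\<lambda>j. \<epsilon> i * x1 j + y i j))
           * f x2 * (\<Prod>i\<in>{l1..l1+l2-2}. f (\<lambda>j. \<epsilon> i * x2 j + y i j))
           * (\<Prod>i\<in>T. f (\<lambda>j. \<epsilon> i * (x1 j + x2 j) + y i j))
     \<le> a * M^(l1-1) * b * M^(l2-1) * (w * M^(l3-1))"
    unfolding P3 a_def[symmetric] b_def[symmetric] w_def[symmetric]
    by (intro mult_mono P1 P2 P3' mult_nonneg_nonneg ab nn M0 zero_le_power order_refl) 
  also have "\<dots> = M^((l1-1)+(l2-1)+(l3-1)) * (a * b * w)" by (simp add: power_add mult_ac)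
  also have "(l1-1)+(l2-1)+(l3-1) = l-3" using assms by simp
  finally show ?thesis unfolding M_def f_def T_def a_def b_def w_def .
qed

lemma final_real:
  fixes c \<delta> :: real and n l :: nat
  assumes c: "c > 1/2" and d: "\<delta> > 0" and l: "l \<ge> 3" and n: "n \<ge> 1"
  shows "ball_vol n powr (-2*real l*c) * (Rrad n \<delta> powr (-2*c*real n))^(l-3) *
          ((pi/sqrt 3)^n * b0 c \<delta> (26/25) n ^ 3 * (1/(1 - zq c (26/25) n))^3)
     \<le> (400 * \<delta> powr (2-2*real l*c) * (1/(1 - zq c (26/25) 1))^3) * (sqrt 3 * (26/25)^2 * 10/19)^n"
proof -
  define q :: real where "q = 26/25"
  have q: "q > 1" "q > 0" by (auto simp: q_def)
  define G where "G = Gamma (real n/2+1)"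
  have G: "G > 0" unfolding G_def by (intro Gamma_real_pos) simp
  have n0: "real n > 0" using n by simp
  have c3: "c > 1/3" using c by simp
  have z: "0 < zq c q n" "zq c q n \<le> zq c q 1" "zq c q 1 < 1" using zq_bounds[OF c3 q(1) n] by auto
  have Z: "(1/(1 - zq c q n))^3 \<le> (1/(1 - zq c q 1))^3"
    using z by (intro power_mono divide_left_mono mult_pos_pos) auto
  have Z0: "(1/(1 - zq c q n))^3 \<ge> 0" using z by simp
  have Gb: "G \<le> 20 * ((real n/2)/(19/20*exp 1)) powr (real n/2)"
    unfolding G_def using gamma_bound[of "real n/2"] n0 by simp
  have G2: "G^2 \<le> 400 * (10*real n/(19*exp 1))^n"
  proof -
    have "G^2 \<le> (20 * ((real n/2)/(19/20*exp 1)) powr (real n/2))^2" using Gb G by (intro power_mono) auto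
    also have "\<dots> = 400 * (((real n/2)/(19/20*exp 1)) powr (real n/2))^2" by (simp add: power_mult_distrib)
    also have "(((real n/2)/(19/20*exp 1)) powr (real n/2))^2 = (10*real n/(19*exp 1))^n"
    proof -
      have e: "(real n/2)/(19/20*exp 1) = 10*real n/(19*exp 1)" by (simp add: field_simps)
      have p: "10*real n/(19*exp 1) > 0" using n0 by simp
      have "((10*real n/(19*exp 1)) powr (real n/2))^2 = (10*real n/(19*exp 1)) powr (real n/2 + real n/2)"
        by (simp only: power2_eq_square powr_add)
      also have "\<dots> = (10*real n/(19*exp 1)) powr (real n)" by simp
      also have "\<dots> = (10*real n/(19*exp 1))^n" using p by (rule powr_realpow)
      finally show ?thesis unfolding e .
    qed
    finally show ?thesis .
  qed
  have A: "ball_vol n powr (-2*real l*c) * (Rrad n \<delta> powr (-2*c*real n))^(l-3) * (pi/sqrt 3)^n * b0 c \<delta> q n ^ 3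
       = \<delta> powr (2-2*real l*c) * G^2 * (sqrt 3 * exp 1 * q^2/real n)^n"
    unfolding G_def by (rule A_eq[OF d q(2) n l])
  have "\<delta> powr (2-2*real l*c) * G^2 * (sqrt 3 * exp 1 * q^2/real n)^n
      \<le> \<delta> powr (2-2*real l*c) * (400 * (10*real n/(19*exp 1))^n) * (sqrt 3 * exp 1 * q^2/real n)^n"
    using G2 q by (intro mult_right_mono mult_left_mono) auto
  also have "\<dots> = 400 * \<delta> powr (2-2*real l*c) * (sqrt 3 * q^2 * 10/19)^n"
  proof -
    have "(10*real n/(19*exp 1)) * (sqrt 3 * exp 1 * q^2/real n) = sqrt 3 * q^2 * 10/19" using n0 by (simp add: field_simps)
    then show ?thesis by (simp add: power_mult_distrib[symmetric] mult_ac)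
  qed
  finally have A2: "ball_vol n powr (-2*real l*c) * (Rrad n \<delta> powr (-2*c*real n))^(l-3) * (pi/sqrt 3)^n * b0 c \<delta> q n ^ 3
      \<le> 400 * \<delta> powr (2-2*real l*c) * (sqrt 3 * q^2 * 10/19)^n" unfolding A .
  have "ball_vol n powr (-2*real l*c) * (Rrad n \<delta> powr (-2*c*real n))^(l-3) *
          ((pi/sqrt 3)^n * b0 c \<delta> q n ^ 3 * (1/(1 - zq c q n))^3)
     = (ball_vol n powr (-2*real l*c) * (Rrad n \<delta> powr (-2*c*real n))^(l-3) * (pi/sqrt 3)^n * b0 c \<delta> q n ^ 3) * (1/(1 - zq c q n))^3"
    by (simp add: mult_ac)
  also have "\<dots> \<le> (400 * \<delta> powr (2-2*real l*c) * (sqrt 3 * q^2 * 10/19)^n) * (1/(1 - zq c q 1))^3"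
    by (rule mult_mono[OF A2 Z _ Z0]) (use q in auto)
  finally show ?thesis by (simp add: q_def mult_ac)
qed

lemma fff_meas:
  "(\<lambda>x2. ennreal (fcd c \<delta> n x1 * fcd c \<delta> n x2 * fcd c \<delta> n (\<lambda>j. e*(x1 j + x2 j) + y j))) \<in> borel_measurable (Rn_measure n)"
  unfolding fcd_def vnorm_def Rn_measure_def by measurable

lemma fff_meas2:
  "(\<lambda>x1. \<integral>\<^sup>+x2. ennreal (fcd c \<delta> n x1 * fcd c \<delta> n x2 * fcd c \<delta> n (\<lambda>j. e*(x1 j + x2 j) + y j)) \<partial>Rn_measure n) \<in> borel_measurable (Rn_measure n)"
proof -
  interpret sigma_finite_measure "Pi\<^sub>M {..<n} (\<lambda>_::nat. lborel::real measure)" using sf_Rn[of n] by (simp add: Rn_measure_def)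
  show ?thesis unfolding fcd_def vnorm_def Rn_measure_def by measurable
qed

theorem theorem5p6:
  fixes c \<delta> :: real and l l1 l2 l3 :: nat
  assumes "c > 1/2" and "\<delta> > 0" and "l \<ge> 3"
    and "l1 \<ge> 1" and "l2 \<ge> 1" and "l3 \<ge> 1" and "l1 + l2 + l3 = l"
  shows "\<exists>K \<rho>. K > 0 \<and> 0 < \<rho> \<and> \<rho> < 1 \<and>
    (\<forall>n \<ge> 1. \<forall>(\<epsilon> :: nat \<Rightarrow> real) (y :: nat \<Rightarrow> nat \<Rightarrow> real).
      (\<forall>i \<in> {1..l-2}. \<epsilon> i = 1 \<or> \<epsilon> i = -1) \<longrightarrow>
      ennreal (ball_vol n powr (- 2 * real l * c)) *
      (\<integral>\<^sup>+ x1. \<integral>\<^sup>+ x2.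
         ennreal (fcd c \<delta> n x1 * (\<Prod>i\<in>{1..l1-1}. fcd c \<delta> n (\<lambda>j. \<epsilon> i * x1 j + y i j))
           * fcd c \<delta> n x2 * (\<Prod>i\<in>{l1..l1+l2-2}. fcd c \<delta> n (\<lambda>j. \<epsilon> i * x2 j + y i j))
           * (\<Prod>i\<in>{l1+l2-1..l-2}. fcd c \<delta> n (\<lambda>j. \<epsilon> i * (x1 j + x2 j) + y i j)))
        \<partial>Rn_measure n \<partial>Rn_measure n)
      \<le> ennreal (K * \<rho> ^ n))"
proof -
  note asm = assms
  have c: "c > 1/2" and d: "\<delta> > 0" and l: "l \<ge> 3" using assms by auto
  have c0: "c > 0" and c3: "c > 1/3" using c by auto
  define q :: real where "q = 26/25"
  have q: "q > 1" by (simp add: q_def)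
  define K where "K = 400 * \<delta> powr (2-2*real l*c) * (1/(1 - zq c (26/25) 1))^3"
  define \<rho> :: real where "\<rho> = sqrt 3 * (26/25)^2 * 10/19"
  have z1: "zq c q 1 < 1" using zq_bounds[OF c3 q, of 1] by simp
  have Kpos: "K > 0" unfolding K_def using z1 d by (simp add: q_def)
  have rpos: "\<rho> > 0" by (simp add: \<rho>_def)
  have "sqrt 3 < sqrt ((11875/6760)^2)" by (subst real_sqrt_less_iff) (simp add: power2_eq_square)
  then have s3: "sqrt 3 < 11875/6760" by simp
  have r1: "\<rho> < 1" unfolding \<rho>_def using s3 by (simp add: power2_eq_square)
  have main: "ennreal (ball_vol n powr (- 2 * real l * c)) *
      (\<integral>\<^sup>+ x1. \<integral>\<^sup>+ x2.
         ennreal (fcd c \<delta> n x1 * (\<Prod>i\<in>{1..l1-1}. fcd c \<delta> n (\<lambda>j. \<epsilon> i * x1 j + y i j))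
           * fcd c \<delta> n x2 * (\<Prod>i\<in>{l1..l1+l2-2}. fcd c \<delta> n (\<lambda>j. \<epsilon> i * x2 j + y i j))
           * (\<Prod>i\<in>{l1+l2-1..l-2}. fcd c \<delta> n (\<lambda>j. \<epsilon> i * (x1 j + x2 j) + y i j)))
        \<partial>Rn_measure n \<partial>Rn_measure n)
      \<le> ennreal (K * \<rho> ^ n)"
    if n: "n \<ge> 1" and eps: "\<forall>i \<in> {1..l-2}. \<epsilon> i = 1 \<or> \<epsilon> i = -1" for n \<epsilon> y
  proof -
    define e where "e = \<epsilon> (l-2)"
    have "l-2 \<in> {1..l-2}" using l by auto
    then have "e = 1 \<or> e = -1" using eps by (simp add: e_def)
    then have e: "e*e = 1" by auto
    define M where "M = Rrad n \<delta> powr (-2*c*real n)"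
    define y' where "y' = y (l-2)"
    define B where "B = (pi / sqrt 3)^n * b0 c \<delta> q n ^ 3 * (1/(1 - zq c q n))^3"
    let ?F = "\<lambda>x1 x2. fcd c \<delta> n x1 * fcd c \<delta> n x2 * fcd c \<delta> n (\<lambda>j. e*(x1 j + x2 j) + y' j)"
    have M0: "M \<ge> 0" by (simp add: M_def)
    have "(\<integral>\<^sup>+ x1. \<integral>\<^sup>+ x2.
         ennreal (fcd c \<delta> n x1 * (\<Prod>i\<in>{1..l1-1}. fcd c \<delta> n (\<lambda>j. \<epsilon> i * x1 j + y i j))
           * fcd c \<delta> n x2 * (\<Prod>i\<in>{l1..l1+l2-2}. fcd c \<delta> n (\<lambda>j. \<epsilon> i * x2 j + y i j))
           * (\<Prod>i\<in>{l1+l2-1..l-2}. fcd c \<delta> n (\<lambda>j. \<epsilon> i * (x1 j + x2 j) + y i j)))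
        \<partial>Rn_measure n \<partial>Rn_measure n)
      \<le> (\<integral>\<^sup>+ x1. \<integral>\<^sup>+ x2. ennreal (M^(l-3)) * ennreal (?F x1 x2) \<partial>Rn_measure n \<partial>Rn_measure n)"
    proof (intro nn_integral_mono)
      fix x1 x2
      show "ennreal (fcd c \<delta> n x1 * (\<Prod>i\<in>{1..l1-1}. fcd c \<delta> n (\<lambda>j. \<epsilon> i * x1 j + y i j))
           * fcd c \<delta> n x2 * (\<Prod>i\<in>{l1..l1+l2-2}. fcd c \<delta> n (\<lambda>j. \<epsilon> i * x2 j + y i j))
           * (\<Prod>i\<in>{l1+l2-1..l-2}. fcd c \<delta> n (\<lambda>j. \<epsilon> i * (x1 j + x2 j) + y i j)))
          \<le> ennreal (M^(l-3)) * ennreal (?F x1 x2)"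
        using F_bound[OF c0 d asm(3-7), of n x1 \<epsilon> y x2] M0
        by (simp add: ennreal_mult[symmetric] fcd_nonneg M_def e_def y'_def ennreal_leI)
    qed
    also have "\<dots> = ennreal (M^(l-3)) * (\<integral>\<^sup>+ x1. \<integral>\<^sup>+ x2. ennreal (?F x1 x2) \<partial>Rn_measure n \<partial>Rn_measure n)"
      apply (subst nn_integral_cmult[symmetric])
       apply (rule fff_meas2)
      apply (rule nn_integral_cong)
      apply (rule nn_integral_cmult)
      apply (rule fff_meas)
      done
    also have "\<dots> \<le> ennreal (M^(l-3)) * ennreal B"
      unfolding B_def
      by (intro mult_left_mono order.trans[OF main_int[OF c0 d q n e] triple_sum_bound[OF c3 d q n]]) simp
    finally have I: "(\<integral>\<^sup>+ x1. \<integral>\<^sup>+ x2.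
         ennreal (fcd c \<delta> n x1 * (\<Prod>i\<in>{1..l1-1}. fcd c \<delta> n (\<lambda>j. \<epsilon> i * x1 j + y i j))
           * fcd c \<delta> n x2 * (\<Prod>i\<in>{l1..l1+l2-2}. fcd c \<delta> n (\<lambda>j. \<epsilon> i * x2 j + y i j))
           * (\<Prod>i\<in>{l1+l2-1..l-2}. fcd c \<delta> n (\<lambda>j. \<epsilon> i * (x1 j + x2 j) + y i j)))
        \<partial>Rn_measure n \<partial>Rn_measure n) \<le> ennreal (M^(l-3)) * ennreal B" .
    have B0: "B \<ge> 0" unfolding B_def using zq_bounds[OF c3 q n] by (simp add: b0_def)
    have "ennreal (ball_vol n powr (- 2 * real l * c)) * (ennreal (M^(l-3)) * ennreal B)
        = ennreal (ball_vol n powr (- 2 * real l * c) * M^(l-3) * B)"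
      using M0 B0 by (simp add: ennreal_mult[symmetric] mult.assoc)
    also have "\<dots> \<le> ennreal (K * \<rho>^n)"
      using final_real[OF c d l n] unfolding K_def \<rho>_def M_def B_def q_def
      by (intro ennreal_leI) simp
    finally have R: "ennreal (ball_vol n powr (- 2 * real l * c)) * (ennreal (M^(l-3)) * ennreal B) \<le> ennreal (K * \<rho>^n)" .
    show ?thesis using mult_left_mono[OF I, of "ennreal (ball_vol n powr (- 2 * real l * c))"] R
      by (auto intro: order.trans)
  qed
  show ?thesis using Kpos rpos r1 main by blast
qed

end
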